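(* Let $(F,(a,b))$ be an edge-rooted graph such that $F$ is rigid and every two distinct vertices of $F$ have a triangle $K_3$ in their common neighbourhood. Then the set of homomorphisms from $F^{\mathrm{sym}}$ to itself is exactly $\{\mathrm{id},\sigma\}$, where $\sigma$ is an automorphism of $F^{\mathrm{sym}}$ with $\sigma(a)=b$ and $\sigma(b)=a$.
   Context: An edge-rooted graph is a pair $(F,(a,b))$ with $F$ a finite simple graph and $(a,b)$ an orientation of an edge of $F$. A graph is rigid if its only endomorphism is the identity. The symmetrization $F^{\mathrm{sym}}$ is obtained by taking two disjoint copies $F_1,F_2$ of $F$, with root vertices $a_1,b_1$ in $F_1$ and $a_2,b_2$ in $F_2$ (copies of $a,b$), and identifying $a_1$ with $b_2$ (call the resulting vertex $a$) and $b_1$ with $a_2$ (call it $b$); it is considered as edge-rooted graph $(F^{\mathrm{sym}},(a,b))$. *)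

theory Defs
  imports Main
begin

definition simple_graph :: "'a set \<Rightarrow> ('a \<Rightarrow> 'a \<Rightarrow> bool) \<Rightarrow> bool" where
  "simple_graph V E \<longleftrightarrow> finite V \<and> (\<forall>x y. E x y \<longrightarrow> x \<in> V \<and> y \<in> V)
     \<and> (\<forall>x y. E x y \<longrightarrow> E y x) \<and> (\<forall>x. \<not> E x x)"

definition graph_hom :: "'a set \<Rightarrow> ('a \<Rightarrow> 'a \<Rightarrow> bool) \<Rightarrow> 'b set \<Rightarrow> ('b \<Rightarrow> 'b \<Rightarrow> bool) \<Rightarrow> ('a \<Rightarrow> 'b) \<Rightarrow> bool" where
  "graph_hom V E V' E' f \<longleftrightarrow> (\<forall>x\<in>V. f x \<in> V') \<and>
     (\<forall>x\<in>V. \<forall>y\<in>V. E x y \<longrightarrow> E' (f x) (f y))"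

definition graph_aut :: "'a set \<Rightarrow> ('a \<Rightarrow> 'a \<Rightarrow> bool) \<Rightarrow> ('a \<Rightarrow> 'a) \<Rightarrow> bool" where
  "graph_aut V E f \<longleftrightarrow> bij_betw f V V \<and> (\<forall>x\<in>V. \<forall>y\<in>V. E x y \<longleftrightarrow> E (f x) (f y))"

definition rigid :: "'a set \<Rightarrow> ('a \<Rightarrow> 'a \<Rightarrow> bool) \<Rightarrow> bool" where
  "rigid V E \<longleftrightarrow> (\<forall>f. graph_hom V E V E f \<longrightarrow> (\<forall>x\<in>V. f x = x))"

text \<open>Symmetrization. Copy 1 is tagged True, copy 2 is tagged False. The vertex (v,i)
  is mapped to a canonical representative: a_2 is identified with b_1 = (b,True) and
  b_2 with a_1 = (a,True).\<close>
fun sym_canon :: "'a \<Rightarrow> 'a \<Rightarrow> 'a \<times> bool \<Rightarrow> 'a \<times> bool" where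
  "sym_canon a b (v, True) = (v, True)"
| "sym_canon a b (v, False) = (if v = a then (b, True) else if v = b then (a, True) else (v, False))"

definition sym_verts :: "'a set \<Rightarrow> 'a \<Rightarrow> 'a \<Rightarrow> ('a \<times> bool) set" where
  "sym_verts V a b = sym_canon a b ` (V \<times> UNIV)"

definition sym_edges :: "('a \<Rightarrow> 'a \<Rightarrow> bool) \<Rightarrow> 'a \<Rightarrow> 'a \<Rightarrow> 'a \<times> bool \<Rightarrow> 'a \<times> bool \<Rightarrow> bool" where
  "sym_edges E a b x y \<longleftrightarrow> (\<exists>u v i. E u v \<and> x = sym_canon a b (u, i) \<and> y = sym_canon a b (v, i))"

end

theory Submission
  imports Defs
begin

lemma sc_T[simp]: "sym_canon a b (u, True) = (u, True)" by simp

lemma sc_inj: "a \<noteq> b \<Longrightarrow> sym_canon a b (u, i) = sym_canon a b (v, i) \<Longrightarrow> u = v"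
  by (cases i) (auto split: if_splits)

lemma sc_cross: "a \<noteq> b \<Longrightarrow> sym_canon a b (p, True) = sym_canon a b (q, False) \<longleftrightarrow>
   (p = b \<and> q = a) \<or> (p = a \<and> q = b)"
  by auto

lemma sc_verts: "x \<in> sym_verts V a b \<longleftrightarrow> (\<exists>u\<in>V. \<exists>i. x = sym_canon a b (u, i))"
  unfolding sym_verts_def by auto

context
  fixes V :: "'a set" and E :: "'a \<Rightarrow> 'a \<Rightarrow> bool" and a b :: 'a
  assumes sg: "simple_graph V E" and ab: "E a b"
begin

lemma anb: "a \<noteq> b" using sg ab unfolding simple_graph_def by metis

lemma Esym: "E x y \<Longrightarrow> E y x" using sg unfolding simple_graph_def by blast
lemma Eirr: "\<not> E x x" using sg unfolding simple_graph_def by blast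
lemma EV: "E x y \<Longrightarrow> x \<in> V \<and> y \<in> V" using sg unfolding simple_graph_def by blast

lemma edge_E:
  assumes "sym_edges E a b (sym_canon a b (p, j)) (sym_canon a b (q, j))"
  shows "E p q"
proof -
  obtain u v k where e: "E u v" and 1: "sym_canon a b (p, j) = sym_canon a b (u, k)"
    and 2: "sym_canon a b (q, j) = sym_canon a b (v, k)"
    using assms unfolding sym_edges_def by blast
  show ?thesis
  proof (cases "k = j")
    case True
    have "p = u" using 1 True by (intro sc_inj[OF anb, of _ j]) simp
    moreover have "q = v" using 2 True by (intro sc_inj[OF anb, of _ j]) simp
    ultimately show ?thesis using e by simp
  next
    case False
    have "(p = b \<and> u = a \<or> p = a \<and> u = b) \<and> (q = b \<and> v = a \<or> q = a \<and> v = b)"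
      using 1 2 False sc_cross[OF anb] by (cases j; cases k) (metis)+
    then show ?thesis using e Eirr Esym ab by blast
  qed
qed

lemma sym_irr: "\<not> sym_edges E a b x x"
  unfolding sym_edges_def using sc_inj[OF anb] Eirr by metis

lemma edge_snd:
  assumes "sym_edges E a b P X" "X \<noteq> (a, True)" "X \<noteq> (b, True)"
  shows "\<exists>u\<in>V. P = sym_canon a b (u, snd X)"
proof -
  obtain u v k where e: "E u v" and 1: "P = sym_canon a b (u, k)"
    and 2: "X = sym_canon a b (v, k)"
    using assms(1) unfolding sym_edges_def by blast
  have "snd X = k" using 2 assms(2,3) by (cases k) (auto split: if_splits)
  then show ?thesis using 1 EV[OF e] by blast
qed

definition sg_sigma :: "'a \<times> bool \<Rightarrow> 'a \<times> bool" where
  "sg_sigma p = sym_canon a b (fst p, \<not> snd p)"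

lemma sigma_c: "sg_sigma (sym_canon a b (u, i)) = sym_canon a b (u, \<not> i)"
  using anb unfolding sg_sigma_def by (cases i) auto

lemma sigma_verts: "x \<in> sym_verts V a b \<Longrightarrow> sg_sigma x \<in> sym_verts V a b"
  unfolding sc_verts using sigma_c by blast

lemma sigma_sigma: "x \<in> sym_verts V a b \<Longrightarrow> sg_sigma (sg_sigma x) = x"
  unfolding sc_verts using sigma_c by auto

lemma sigma_edge: "sym_edges E a b x y \<Longrightarrow> sym_edges E a b (sg_sigma x) (sg_sigma y)"
  unfolding sym_edges_def using sigma_c by metis

lemma edge_verts: "sym_edges E a b x y \<Longrightarrow> x \<in> sym_verts V a b \<and> y \<in> sym_verts V a b"
  unfolding sym_edges_def sc_verts using EV by metis

lemma sigma_aut: "graph_aut (sym_verts V a b) (sym_edges E a b) sg_sigma"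
  unfolding graph_aut_def
proof (intro conjI ballI)
  show "bij_betw sg_sigma (sym_verts V a b) (sym_verts V a b)"
    by (rule bij_betw_byWitness[where f'=sg_sigma]) (auto simp: sigma_sigma sigma_verts)
  fix x y assume "x \<in> sym_verts V a b" "y \<in> sym_verts V a b"
  then show "sym_edges E a b x y = sym_edges E a b (sg_sigma x) (sg_sigma y)"
    using sigma_edge sigma_sigma by metis
qed

lemma pair_copy:
  assumes hom: "graph_hom (sym_verts V a b) (sym_edges E a b) (sym_verts V a b) (sym_edges E a b) f"
    and tri: "\<forall>u\<in>V. \<forall>v\<in>V. u \<noteq> v \<longrightarrow>
           (\<exists>x y z. E u x \<and> E v x \<and> E u y \<and> E v y \<and> E u z \<and> E v z
                 \<and> E x y \<and> E y z \<and> E x z)"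
    and uv: "u \<in> V" "v \<in> V" "u \<noteq> v"
  shows "\<exists>j. (\<exists>u'\<in>V. f (sym_canon a b (u, i)) = sym_canon a b (u', j))
           \<and> (\<exists>v'\<in>V. f (sym_canon a b (v, i)) = sym_canon a b (v', j))"
proof -
  obtain x y z where t: "E u x" "E v x" "E u y" "E v y" "E u z" "E v z" "E x y" "E y z" "E x z"
    using tri uv by meson
  define c where "c w = f (sym_canon a b (w, i))" for w
  have ce: "sym_edges E a b (c p) (c q)" if "E p q" for p q
  proof -
    have "sym_edges E a b (sym_canon a b (p, i)) (sym_canon a b (q, i))"
      unfolding sym_edges_def using that by blast
    moreover have "sym_canon a b (p, i) \<in> sym_verts V a b" "sym_canon a b (q, i) \<in> sym_verts V a b"
      using EV[OF that] unfolding sc_verts by blast+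
    ultimately show ?thesis using hom unfolding graph_hom_def c_def by blast
  qed
  have d1: "c x \<noteq> c y" using ce[OF t(7)] sym_irr by metis
  have d2: "c y \<noteq> c z" using ce[OF t(8)] sym_irr by metis
  have d3: "c x \<noteq> c z" using ce[OF t(9)] sym_irr by metis
  have "\<exists>X. (X = c x \<or> X = c y \<or> X = c z) \<and> X \<noteq> (a, True) \<and> X \<noteq> (b, True)"
  proof (cases "c x \<noteq> (a, True) \<and> c x \<noteq> (b, True)")
    case True then show ?thesis by blast
  next
    case F1: False
    show ?thesis
    proof (cases "c y \<noteq> (a, True) \<and> c y \<noteq> (b, True)")
      case True then show ?thesis by blast
    next
      case F2: False
      have "c z \<noteq> (a, True) \<and> c z \<noteq> (b, True)" using F1 F2 d1 d2 d3 by metis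
      then show ?thesis by blast
    qed
  qed
  then obtain X where X: "X = c x \<or> X = c y \<or> X = c z" "X \<noteq> (a, True)" "X \<noteq> (b, True)"
    by blast
  have e1: "sym_edges E a b (c u) X" using X(1) ce t(1,3,5) by metis
  have e2: "sym_edges E a b (c v) X" using X(1) ce t(2,4,6) by metis
  obtain u' where "u' \<in> V" "c u = sym_canon a b (u', snd X)" using edge_snd[OF e1 X(2,3)] by blast
  moreover obtain v' where "v' \<in> V" "c v = sym_canon a b (v', snd X)" using edge_snd[OF e2 X(2,3)] by blast
  ultimately show ?thesis unfolding c_def by blast
qed

lemma all_copy:
  assumes hom: "graph_hom (sym_verts V a b) (sym_edges E a b) (sym_verts V a b) (sym_edges E a b) f"
    and tri: "\<forall>u\<in>V. \<forall>v\<in>V. u \<noteq> v \<longrightarrow>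
           (\<exists>x y z. E u x \<and> E v x \<and> E u y \<and> E v y \<and> E u z \<and> E v z
                 \<and> E x y \<and> E y z \<and> E x z)"
  shows "\<exists>j. \<forall>u\<in>V. \<exists>w\<in>V. f (sym_canon a b (u, i)) = sym_canon a b (w, j)"
proof (rule ccontr)
  assume "\<not> ?thesis"
  then have h1: "\<not> (\<forall>u\<in>V. \<exists>w\<in>V. f (sym_canon a b (u, i)) = sym_canon a b (w, True))"
    and h2: "\<not> (\<forall>u\<in>V. \<exists>w\<in>V. f (sym_canon a b (u, i)) = sym_canon a b (w, False))"
    by blast+
  obtain u1 where u1: "u1 \<in> V"
    and n1: "\<forall>w\<in>V. f (sym_canon a b (u1, i)) \<noteq> sym_canon a b (w, True)"
    using h1 by blast
  obtain u2 where u2: "u2 \<in> V"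
    and n2: "\<forall>w\<in>V. f (sym_canon a b (u2, i)) \<noteq> sym_canon a b (w, False)"
    using h2 by blast
  note u = u1 u2
  have inV: "f (sym_canon a b (w, i)) \<in> sym_verts V a b" if "w \<in> V" for w
  proof -
    have "sym_canon a b (w, i) \<in> sym_verts V a b" using that unfolding sc_verts by blast
    then show ?thesis using hom unfolding graph_hom_def by blast
  qed
  show False
  proof (cases "u1 = u2")
    case True
    obtain w k where "w \<in> V" "f (sym_canon a b (u1, i)) = sym_canon a b (w, k)"
      using inV[OF u(1)] unfolding sc_verts by blast
    then show ?thesis using n1 n2 True by (cases k) auto
  next
    case False
    then obtain j where "(\<exists>u'\<in>V. f (sym_canon a b (u1, i)) = sym_canon a b (u', j))"
           "(\<exists>v'\<in>V. f (sym_canon a b (u2, i)) = sym_canon a b (v', j))"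
      using pair_copy[OF hom tri u] by blast
    then show ?thesis using n1 n2 by (cases j) auto
  qed
qed

lemma rigid_copy:
  assumes hom: "graph_hom (sym_verts V a b) (sym_edges E a b) (sym_verts V a b) (sym_edges E a b) f"
    and rig: "rigid V E"
    and cp: "\<forall>u\<in>V. \<exists>w\<in>V. f (sym_canon a b (u, i)) = sym_canon a b (w, j)"
  shows "\<forall>u\<in>V. f (sym_canon a b (u, i)) = sym_canon a b (u, j)"
proof -
  define g where "g u = (SOME w. w \<in> V \<and> f (sym_canon a b (u, i)) = sym_canon a b (w, j))" for u
  have g: "g u \<in> V \<and> f (sym_canon a b (u, i)) = sym_canon a b (g u, j)" if "u \<in> V" for u
  proof -
    from cp that have "\<exists>w. w \<in> V \<and> f (sym_canon a b (u, i)) = sym_canon a b (w, j)" by blast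
    then show ?thesis unfolding g_def by (rule someI_ex)
  qed
  have "graph_hom V E V E g"
    unfolding graph_hom_def
  proof (intro conjI ballI impI)
    fix x assume "x \<in> V" then show "g x \<in> V" using g by blast
  next
    fix x y assume xy: "x \<in> V" "y \<in> V" "E x y"
    have "sym_edges E a b (sym_canon a b (x, i)) (sym_canon a b (y, i))"
      unfolding sym_edges_def using xy by blast
    moreover have "sym_canon a b (x, i) \<in> sym_verts V a b" "sym_canon a b (y, i) \<in> sym_verts V a b"
      using xy unfolding sc_verts by blast+
    ultimately have "sym_edges E a b (f (sym_canon a b (x, i))) (f (sym_canon a b (y, i)))"
      using hom unfolding graph_hom_def by blast
    then have "sym_edges E a b (sym_canon a b (g x, j)) (sym_canon a b (g y, j))"
      using g[OF xy(1)] g[OF xy(2)] by simp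
    then show "E (g x) (g y)" by (rule edge_E)
  qed
  then have "\<forall>x\<in>V. g x = x" using rig unfolding rigid_def by blast
  then show ?thesis using g by simp
qed

end

theorem mainTheorem11:
  fixes V :: "'a set" and E :: "'a \<Rightarrow> 'a \<Rightarrow> bool" and a b :: 'a
  assumes "simple_graph V E"
    and "E a b"
    and "rigid V E"
    and "\<forall>u\<in>V. \<forall>v\<in>V. u \<noteq> v \<longrightarrow>
           (\<exists>x y z. E u x \<and> E v x \<and> E u y \<and> E v y \<and> E u z \<and> E v z
                 \<and> E x y \<and> E y z \<and> E x z)"
  shows "\<exists>\<sigma>. graph_aut (sym_verts V a b) (sym_edges E a b) \<sigma>
            \<and> \<sigma> (a, True) = (b, True) \<and> \<sigma> (b, True) = (a, True)
            \<and> (\<forall>f. graph_hom (sym_verts V a b) (sym_edges E a b) (sym_verts V a b) (sym_edges E a b) f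
                   \<longleftrightarrow> ((\<forall>x\<in>sym_verts V a b. f x = x) \<or> (\<forall>x\<in>sym_verts V a b. f x = \<sigma> x)))"
proof -
  note sg = assms(1) and ab = assms(2)
  have anb: "a \<noteq> b" using anb[OF sg ab] .
  define \<sigma> where "\<sigma> = sg_sigma a b"
  let ?W = "sym_verts V a b" and ?R = "sym_edges E a b"
  have ct: "sym_canon a b (x, True) = (x, True)" for x by simp
  have eq1: "sym_canon a b (a, True) = sym_canon a b (b, False)" using anb by simp
  have eq2: "sym_canon a b (b, True) = sym_canon a b (a, False)" by simp
  have hom_iff: "graph_hom ?W ?R ?W ?R f \<longleftrightarrow> ((\<forall>x\<in>?W. f x = x) \<or> (\<forall>x\<in>?W. f x = \<sigma> x))" for f
  proof
    assume hom: "graph_hom ?W ?R ?W ?R f"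
    obtain j1 where "\<forall>u\<in>V. \<exists>w\<in>V. f (sym_canon a b (u, True)) = sym_canon a b (w, j1)"
      using all_copy[OF sg ab hom assms(4)] by blast
    then have j1: "\<forall>u\<in>V. f (sym_canon a b (u, True)) = sym_canon a b (u, j1)"
      using rigid_copy[OF sg ab hom assms(3)] by blast
    obtain j2 where "\<forall>u\<in>V. \<exists>w\<in>V. f (sym_canon a b (u, False)) = sym_canon a b (w, j2)"
      using all_copy[OF sg ab hom assms(4)] by blast
    then have j2: "\<forall>u\<in>V. f (sym_canon a b (u, False)) = sym_canon a b (u, j2)"
      using rigid_copy[OF sg ab hom assms(3)] by blast
    have aV: "a \<in> V" and bV: "b \<in> V" using EV[OF sg ab ab] by auto
    have "sym_canon a b (a, j1) = sym_canon a b (b, j2)"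
      using j1 j2 aV bV eq1 by metis
    then have "j1 \<noteq> j2" using sc_inj[OF anb, of a j1 b] anb by blast
    then have j2e: "j2 = (\<not> j1)" by blast
    show "(\<forall>x\<in>?W. f x = x) \<or> (\<forall>x\<in>?W. f x = \<sigma> x)"
    proof (cases j1)
      case True
      have "\<forall>x\<in>?W. f x = x"
      proof
        fix x assume "x \<in> ?W"
        then obtain u k where "u \<in> V" "x = sym_canon a b (u, k)" unfolding sc_verts by blast
        then show "f x = x" using j1 j2 j2e True by (cases k) auto
      qed
      then show ?thesis by blast
    next
      case False
      have "\<forall>x\<in>?W. f x = \<sigma> x"
      proof
        fix x assume "x \<in> ?W"
        then obtain u k where "u \<in> V" "x = sym_canon a b (u, k)" unfolding sc_verts by blast
        moreover have "\<sigma> x = sym_canon a b (u, \<not> k)"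
          unfolding \<sigma>_def \<open>x = sym_canon a b (u, k)\<close> by (rule sigma_c[OF sg ab])
        moreover have "f x = sym_canon a b (u, \<not> k)"
          using j1 j2 j2e False \<open>u \<in> V\<close> \<open>x = sym_canon a b (u, k)\<close> by (cases k) auto
        ultimately show "f x = \<sigma> x" by simp
      qed
      then show ?thesis by blast
    qed
  next
    assume "(\<forall>x\<in>?W. f x = x) \<or> (\<forall>x\<in>?W. f x = \<sigma> x)"
    then show "graph_hom ?W ?R ?W ?R f"
    proof
      assume "\<forall>x\<in>?W. f x = x"
      then show ?thesis unfolding graph_hom_def by simp
    next
      assume h: "\<forall>x\<in>?W. f x = \<sigma> x"
      then show ?thesis unfolding graph_hom_def \<sigma>_def
        using sigma_verts[OF sg ab] sigma_edge[OF sg ab] by simp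
    qed
  qed
  have "graph_aut ?W ?R \<sigma>" unfolding \<sigma>_def by (rule sigma_aut[OF sg ab])
  moreover have "\<sigma> (a, True) = (b, True)" unfolding \<sigma>_def using sigma_c[OF sg ab, of a True] by simp
  moreover have "\<sigma> (b, True) = (a, True)" unfolding \<sigma>_def using sigma_c[OF sg ab, of b True] anb by simp
  ultimately show ?thesis using hom_iff by blast
qed

end
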